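(* For the gossip USD, distinct opinions $i,j\in[k]$, $\varepsilon\in[0,1]$, and every $t\ge1$, writing $\delta^{(\varepsilon)}_t=\alpha_t(i)-(1+\varepsilon)\alpha_t(j)$ and $\delta_t=\delta^{(0)}_t$: (1) $\mathbb E_{t-1}[\delta^{(\varepsilon)}_t]=\delta^{(\varepsilon)}_{t-1}\big(\alpha_{t-1}(i)+\alpha_{t-1}(j)+2(1-\beta_{t-1})\big)+\varepsilon\,\alpha_{t-1}(i)\alpha_{t-1}(j)$. In particular, if $\beta_{t-1}>0$, then $\mathbb E_{t-1}[\delta_t]=\delta_{t-1}\Big(1+\alpha_{t-1}(i)+\alpha_{t-1}(j)-\frac{\gamma_{t-1}+\psi_{t-1}}{\beta_{t-1}}\Big)$. (2) $\mathrm{Var}_{t-1}[\delta_t]\ge\frac{(1-\beta_{t-1})^2}{n}\big(\alpha_{t-1}(i)+\alpha_{t-1}(j)\big)$. (3) Conditioned on $\mathcal F_{t-1}$, $\delta^{(\varepsilon)}_t-\mathbb E_{t-1}[\delta^{(\varepsilon)}_t]$ satisfies the $\big(\frac{2(1+\varepsilon)}{n},\ \frac2n(\alpha_{t-1}(i)+(1+\varepsilon)^2\alpha_{t-1}(j))\big)$-Bernstein condition.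
   Context: Vertex set $V$, $|V|=n$; opinions in $\Sigma=[k]\cup\{\bot\}$ ($\bot$ = undecided). USD update rule: $\mathsf{update}(\sigma_1,\sigma_2)=\bot$ if $\sigma_1,\sigma_2\in[k]$ and $\sigma_1\ne\sigma_2$; $=\sigma_2$ if $\sigma_1=\bot$; $=\sigma_1$ otherwise. Gossip USD: given $\mathrm{opn}_t\in\Sigma^V$, every $u\in V$ independently picks $v$ uniformly from $V$ and sets $\mathrm{opn}_{t+1}(u)=\mathsf{update}(\mathrm{opn}_t(u),\mathrm{opn}_t(v))$. Notation: $\alpha_t(i)=|\{u:\mathrm{opn}_t(u)=i\}|/n$, $\beta_t=\sum_{i\in[k]}\alpha_t(i)$, $\gamma_t=\sum_{i\in[k]}\alpha_t(i)^2$, $\psi_t=\beta_t(2\beta_t-1)-\gamma_t$. $(\mathcal F_t)$ is the natural filtration; $\mathbb E_{t-1},\mathrm{Var}_{t-1}$ are conditional on $\mathcal F_{t-1}$. Bernstein condition: for $D,s\ge0$, $X$ satisfies the $(D,s)$-Bernstein condition if $\mathbb E[e^{\lambda X}]\le\exp\!\big(\frac{\lambda^2 s/2}{1-|\lambda|D/3}\big)$ for all real $\lambda$ with $|\lambda|D<3$ (one-sided: only for $\lambda\ge0$). Conditioned on $\mathcal F_{t-1}$: the same with $\mathbb E_{t-1}$, almost surely. *)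

theory Defs
  imports "HOL-Probability.Probability"
begin

text \<open>Opinions: None is the undecided opinion, Some i with i in {1..k} a decided opinion.\<close>

fun usd_update :: "nat option \<Rightarrow> nat option \<Rightarrow> nat option" where
  "usd_update None s2 = s2"
| "usd_update (Some a) None = Some a"
| "usd_update (Some a) (Some b) = (if a = b then Some a else None)"

text \<open>One step of gossip USD from configuration opn: every vertex u of V independently
  picks v uniformly from V and updates. This is the law of opn_t given F_(t-1).\<close>
definition gossip_step :: "'v set \<Rightarrow> ('v \<Rightarrow> nat option) \<Rightarrow> ('v \<Rightarrow> nat option) pmf" where
  "gossip_step V opn =
     map_pmf (\<lambda>c u. usd_update (opn u) (opn (c u))) (Pi_pmf V undefined (\<lambda>_. pmf_of_set V))"

definition alpha :: "'v set \<Rightarrow> ('v \<Rightarrow> nat option) \<Rightarrow> nat \<Rightarrow> real" where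
  "alpha V opn i = real (card {u \<in> V. opn u = Some i}) / real (card V)"

definition beta :: "'v set \<Rightarrow> nat \<Rightarrow> ('v \<Rightarrow> nat option) \<Rightarrow> real" where
  "beta V k opn = (\<Sum>i\<in>{1..k}. alpha V opn i)"

definition gamma :: "'v set \<Rightarrow> nat \<Rightarrow> ('v \<Rightarrow> nat option) \<Rightarrow> real" where
  "gamma V k opn = (\<Sum>i\<in>{1..k}. (alpha V opn i)\<^sup>2)"

definition psi :: "'v set \<Rightarrow> nat \<Rightarrow> ('v \<Rightarrow> nat option) \<Rightarrow> real" where
  "psi V k opn = beta V k opn * (2 * beta V k opn - 1) - gamma V k opn"

definition bernstein_cond :: "'a measure \<Rightarrow> ('a \<Rightarrow> real) \<Rightarrow> real \<Rightarrow> real \<Rightarrow> bool" where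
  "bernstein_cond M X D s \<longleftrightarrow>
     (\<forall>l::real. \<bar>l\<bar> * D < 3 \<longrightarrow>
        (\<integral>x. exp (l * X x) \<partial>M) \<le> exp ((l\<^sup>2 * s / 2) / (1 - \<bar>l\<bar> * D / 3)))"

end

theory Submission
  imports Defs
begin



lemma fin_Pi_pmf:
  assumes "finite V" "\<And>u. u \<in> V \<Longrightarrow> finite (set_pmf (p u))"
  shows "finite (set_pmf (Pi_pmf V d p))"
  using assms by (auto simp: set_Pi_pmf intro!: finite_PiE_dflt)

lemma E_sum_Pi:
  fixes g :: "'a \<Rightarrow> 'b \<Rightarrow> real"
  assumes "finite V" "\<And>u. u \<in> V \<Longrightarrow> finite (set_pmf (p u))"
  shows "measure_pmf.expectation (Pi_pmf V d p) (\<lambda>c. \<Sum>u\<in>V. g u (c u))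
       = (\<Sum>u\<in>V. measure_pmf.expectation (p u) (g u))"
proof -
  have fin: "finite (set_pmf (Pi_pmf V d p))" by (rule fin_Pi_pmf[OF assms])
  have "measure_pmf.expectation (Pi_pmf V d p) (\<lambda>c. \<Sum>u\<in>V. g u (c u))
       = (\<Sum>u\<in>V. measure_pmf.expectation (Pi_pmf V d p) (\<lambda>c. g u (c u)))"
    by (rule Bochner_Integration.integral_sum) (simp add: integrable_measure_pmf_finite[OF fin])
  also have "\<dots> = (\<Sum>u\<in>V. measure_pmf.expectation (map_pmf (\<lambda>c. c u) (Pi_pmf V d p)) (g u))"
    by simp
  also have "\<dots> = (\<Sum>u\<in>V. measure_pmf.expectation (p u) (g u))"
    by (intro sum.cong refl, subst Pi_pmf_component) (use assms in auto)
  finally show ?thesis .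
qed

lemma E_pair_Pi:
  fixes g h :: "'b \<Rightarrow> real"
  assumes "finite V" "\<And>u. u \<in> V \<Longrightarrow> finite (set_pmf (p u))" "u \<in> V" "v \<in> V" "u \<noteq> v"
  shows "measure_pmf.expectation (Pi_pmf V d p) (\<lambda>c. g (c u) * h (c v))
       = measure_pmf.expectation (p u) g * measure_pmf.expectation (p v) h"
proof -
  let ?Q = "Pi_pmf V d p"
  have fin: "finite (set_pmf ?Q)" by (rule fin_Pi_pmf[OF assms(1,2)])
  define F where "F x = (if x = u then g else h)" for x
  have ind: "prob_space.indep_vars (measure_pmf ?Q) (\<lambda>_. borel) (\<lambda>x c. F x (c x)) V"
    by (rule prob_space.indep_vars_compose2[OF measure_pmf.prob_space_axioms indep_vars_Pi_pmf[OF assms(1)]])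
       simp
  hence ind2: "prob_space.indep_vars (measure_pmf ?Q) (\<lambda>_. borel) (\<lambda>x c. F x (c x)) {u,v}"
    by (rule prob_space.indep_vars_subset[OF measure_pmf.prob_space_axioms]) (use assms in auto)
  have "measure_pmf.expectation ?Q (\<lambda>c. \<Prod>x\<in>{u,v}. F x (c x)) = (\<Prod>x\<in>{u,v}. measure_pmf.expectation ?Q (\<lambda>c. F x (c x)))"
    by (rule prob_space.indep_vars_lebesgue_integral[OF measure_pmf.prob_space_axioms _ ind2])
       (auto simp: integrable_measure_pmf_finite[OF fin])
  also have "(\<lambda>c. \<Prod>x\<in>{u,v}. F x (c x)) = (\<lambda>c. g (c u) * h (c v))"
    using assms by (simp add: F_def)
  also have "(\<Prod>x\<in>{u,v}. measure_pmf.expectation ?Q (\<lambda>c. F x (c x))) =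
     measure_pmf.expectation (map_pmf (\<lambda>c. c u) ?Q) g * measure_pmf.expectation (map_pmf (\<lambda>c. c v) ?Q) h"
    using assms by (simp add: F_def)
  also have "\<dots> = measure_pmf.expectation (p u) g * measure_pmf.expectation (p v) h"
    using assms by (simp add: Pi_pmf_component)
  finally show ?thesis .
qed

lemma E_prod_exp_Pi:
  fixes g :: "'a \<Rightarrow> 'b \<Rightarrow> real"
  assumes "finite V" "\<And>u. u \<in> V \<Longrightarrow> finite (set_pmf (p u))"
  shows "measure_pmf.expectation (Pi_pmf V d p) (\<lambda>c. exp (\<Sum>u\<in>V. g u (c u)))
       = (\<Prod>u\<in>V. measure_pmf.expectation (p u) (\<lambda>w. exp (g u w)))"
  unfolding exp_sum[OF assms(1)]
  by (rule expectation_prod_Pi_pmf[where f="\<lambda>u w. exp (g u w)", OF assms(1)])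
     (auto intro: integrable_measure_pmf_finite assms(2))

lemma E_comp_Pi:
  fixes g :: "'b \<Rightarrow> real"
  assumes "finite V" "u \<in> V"
  shows "measure_pmf.expectation (Pi_pmf V d p) (\<lambda>c. g (c u)) = measure_pmf.expectation (p u) g"
proof -
  have "measure_pmf.expectation (Pi_pmf V d p) (\<lambda>c. g (c u)) =
     measure_pmf.expectation (map_pmf (\<lambda>c. c u) (Pi_pmf V d p)) g" by simp
  also have "\<dots> = measure_pmf.expectation (p u) g" using assms by (simp add: Pi_pmf_component)
  finally show ?thesis .
qed

lemma Var_sum_Pi:
  fixes g :: "'a \<Rightarrow> 'b \<Rightarrow> real"
  assumes "finite V" "\<And>u. u \<in> V \<Longrightarrow> finite (set_pmf (p u))"
  shows "measure_pmf.variance (Pi_pmf V d p) (\<lambda>c. \<Sum>u\<in>V. g u (c u))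
       = (\<Sum>u\<in>V. measure_pmf.variance (p u) (g u))"
proof -
  let ?Q = "Pi_pmf V d p"
  have fin: "finite (set_pmf ?Q)" by (rule fin_Pi_pmf[OF assms])
  define m where "m u = measure_pmf.expectation (p u) (g u)" for u
  define h where "h u w = g u w - m u" for u w
  have Eh: "measure_pmf.expectation (p u) (h u) = 0" if "u \<in> V" for u
    unfolding h_def m_def
    by (subst Bochner_Integration.integral_diff) (auto intro: integrable_measure_pmf_finite assms(2) that)
  have ES: "measure_pmf.expectation ?Q (\<lambda>c. \<Sum>u\<in>V. g u (c u)) = (\<Sum>u\<in>V. m u)"
    unfolding m_def by (rule E_sum_Pi[OF assms])
  have sq: "((\<Sum>u\<in>V. g u (c u)) - (\<Sum>u\<in>V. m u))\<^sup>2 = (\<Sum>u\<in>V. \<Sum>v\<in>V. h u (c u) * h v (c v))" for c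
  proof -
    have "(\<Sum>u\<in>V. g u (c u)) - (\<Sum>u\<in>V. m u) = (\<Sum>u\<in>V. h u (c u))"
      by (simp add: h_def sum_subtractf)
    thus ?thesis by (simp add: power2_eq_square sum_product)
  qed
  have "measure_pmf.variance ?Q (\<lambda>c. \<Sum>u\<in>V. g u (c u)) =
     measure_pmf.expectation ?Q (\<lambda>c. \<Sum>u\<in>V. \<Sum>v\<in>V. h u (c u) * h v (c v))"
    unfolding ES sq ..
  also have "\<dots> = (\<Sum>u\<in>V. \<Sum>v\<in>V. measure_pmf.expectation ?Q (\<lambda>c. h u (c u) * h v (c v)))"
    by (simp add: Bochner_Integration.integral_sum integrable_measure_pmf_finite[OF fin])
  also have "\<dots> = (\<Sum>u\<in>V. \<Sum>v\<in>V. if v = u then measure_pmf.variance (p u) (g u) else 0)"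
  proof (intro sum.cong refl)
    fix u v assume uv: "u \<in> V" "v \<in> V"
    show "measure_pmf.expectation ?Q (\<lambda>c. h u (c u) * h v (c v)) =
      (if v = u then measure_pmf.variance (p u) (g u) else 0)"
    proof (cases "v = u")
      case True
      then show ?thesis
        using E_comp_Pi[OF assms(1) uv(1), where d=d and p=p and g="\<lambda>w. h u w * h u w"]
        by (simp add: h_def m_def power2_eq_square)
    next
      case False
      then show ?thesis
        using E_pair_Pi[OF assms uv(1) uv(2) False[symmetric], where g="h u" and h="h v" and d=d] Eh uv by simp
    qed
  qed
  also have "\<dots> = (\<Sum>u\<in>V. measure_pmf.variance (p u) (g u))"
    using assms(1) by simp
  finally show ?thesis .
qed



lemma fact_ge_3pow: "2 * 3 ^ n \<le> (fact (n + 2) :: real)"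
proof (induction n)
  case 0 then show ?case by simp
next
  case (Suc n)
  have e: "(fact (Suc n + 2) :: real) = of_nat (Suc (n + 2)) * fact (n + 2)"
    by (simp only: add_Suc fact_Suc)
  have "(3::real) * fact (n + 2) \<le> of_nat (Suc (n + 2)) * fact (n + 2)"
    by (intro mult_right_mono) auto
  moreover have "(3::real) * (2 * 3 ^ n) \<le> 3 * fact (n + 2)" using Suc.IH by linarith
  moreover have "2 * 3 ^ Suc n = (3::real) * (2 * 3^n)" by simp
  ultimately show ?case unfolding e by linarith
qed

lemma exp_bern:
  fixes x :: real assumes "\<bar>x\<bar> < 3"
  shows "exp x \<le> 1 + x + x\<^sup>2 / 2 / (1 - \<bar>x\<bar> / 3)"
proof -
  define a where "a n = inverse (fact (n + 2)) * x ^ (n + 2)" for n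
  define b where "b n = x\<^sup>2 / 2 * (\<bar>x\<bar> / 3) ^ n" for n
  have q: "norm (\<bar>x\<bar> / 3) < 1" using assms by simp
  have sb: "summable b" unfolding b_def
    by (intro summable_mult summable_geometric) (use q in simp)
  have ab: "norm (a n) \<le> b n" for n
  proof -
    have "norm (a n) = \<bar>x\<bar> ^ (n + 2) / fact (n + 2)"
      by (simp add: a_def power_abs abs_mult divide_inverse mult.commute del: fact_Suc)
    also have "\<dots> \<le> \<bar>x\<bar> ^ (n + 2) / (2 * 3 ^ n)"
      by (intro divide_left_mono fact_ge_3pow) auto
    also have "\<dots> = b n"
      by (simp add: b_def power_add power_divide power2_eq_square power_abs[symmetric])
    finally show ?thesis .
  qed
  have sa: "summable a" by (rule summable_comparison_test[OF _ sb]) (use ab in auto)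
  have "exp x = 1 + x + suminf a"
    using exp_first_two_terms[of x] unfolding a_def real_scaleR_def .
  also have "suminf a \<le> suminf b"
    by (rule suminf_le[OF _ sa sb]) (use ab in \<open>auto intro: order_trans[OF abs_ge_self]\<close>)
  also have "suminf b = x\<^sup>2 / 2 * (1 / (1 - \<bar>x\<bar> / 3))"
  proof -
    have "suminf b = x\<^sup>2 / 2 * (\<Sum>n. (\<bar>x\<bar> / 3) ^ n)"
      unfolding b_def by (rule suminf_mult) (rule summable_geometric[OF q])
    also have "(\<Sum>n. (\<bar>x\<bar> / 3) ^ n) = 1 / (1 - \<bar>x\<bar> / 3)" by (rule suminf_geometric[OF q])
    finally show ?thesis .
  qed
  finally show ?thesis by simp
qed

lemma bern_scalar:
  fixes h :: "'b \<Rightarrow> real" and p :: "'b pmf"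
  assumes fin: "finite (set_pmf p)"
    and E0: "measure_pmf.expectation p h = 0"
    and bd: "\<And>w. w \<in> set_pmf p \<Longrightarrow> \<bar>h w\<bar> \<le> D"
    and l: "\<bar>l\<bar> * D < 3"
  shows "measure_pmf.expectation p (\<lambda>w. exp (l * h w)) \<le>
          exp (l\<^sup>2 * measure_pmf.expectation p (\<lambda>w. (h w)\<^sup>2) / 2 / (1 - \<bar>l\<bar> * D / 3))"
proof -
  define K where "K = 1 / (2 * (1 - \<bar>l\<bar> * D / 3))"
  have K: "K > 0" using l by (simp add: K_def mult.commute)
  have pt: "exp (l * h w) \<le> 1 + l * h w + l\<^sup>2 * K * (h w)\<^sup>2" if w: "w \<in> set_pmf p" for w
  proof -
    have hw: "\<bar>l * h w\<bar> \<le> \<bar>l\<bar> * D"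
      using bd[OF w] by (simp add: abs_mult mult_left_mono)
    have "exp (l * h w) \<le> 1 + l * h w + (l * h w)\<^sup>2 / 2 / (1 - \<bar>l * h w\<bar> / 3)"
      by (rule exp_bern) (use hw l in linarith)
    also have "(l * h w)\<^sup>2 / 2 / (1 - \<bar>l * h w\<bar> / 3) \<le> (l * h w)\<^sup>2 / 2 / (1 - \<bar>l\<bar> * D / 3)"
      by (intro divide_left_mono mult_pos_pos) (use hw l in auto)
    also have "(l * h w)\<^sup>2 / 2 / (1 - \<bar>l\<bar> * D / 3) = l\<^sup>2 * K * (h w)\<^sup>2"
      by (simp add: K_def power_mult_distrib)
    finally show ?thesis by simp
  qed
  have "measure_pmf.expectation p (\<lambda>w. exp (l * h w)) \<le>
        measure_pmf.expectation p (\<lambda>w. 1 + l * h w + l\<^sup>2 * K * (h w)\<^sup>2)"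
    by (intro integral_mono_AE AE_pmfI pt) (auto intro: integrable_measure_pmf_finite[OF fin])
  also have "\<dots> = 1 + l * measure_pmf.expectation p h + l\<^sup>2 * K * measure_pmf.expectation p (\<lambda>w. (h w)\<^sup>2)"
    by (simp add: integrable_measure_pmf_finite[OF fin] Bochner_Integration.integral_add)
  also have "\<dots> = 1 + l\<^sup>2 * K * measure_pmf.expectation p (\<lambda>w. (h w)\<^sup>2)" using E0 by simp
  also have "\<dots> \<le> exp (l\<^sup>2 * K * measure_pmf.expectation p (\<lambda>w. (h w)\<^sup>2))"
    by (rule exp_ge_add_one_self)
  also have "l\<^sup>2 * K * measure_pmf.expectation p (\<lambda>w. (h w)\<^sup>2) =
     l\<^sup>2 * measure_pmf.expectation p (\<lambda>w. (h w)\<^sup>2) / 2 / (1 - \<bar>l\<bar> * D / 3)"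
    by (simp add: K_def)
  finally show ?thesis .
qed



lemma alpha_sum:
  assumes "finite V"
  shows "alpha V c l = (\<Sum>u\<in>V. of_bool (c u = Some l)) / real (card V)"
proof -
  have "{u \<in> V. c u = Some l} = V \<inter> {u. c u = Some l}" by auto
  thus ?thesis using assms by (simp add: alpha_def)
qed

lemma ind_upd:
  "(of_bool (usd_update x y = Some l) :: real) =
     of_bool (x = Some l) * (of_bool (y = Some l) + of_bool (y = None)) + of_bool (x = None) * of_bool (y = Some l)"
  by (cases x; cases y) auto

lemma pair_count:
  fixes x :: "'v \<Rightarrow> nat option"
  shows "(\<Sum>u\<in>V. \<Sum>w\<in>V. (of_bool (usd_update (x u) (x w) = Some l) :: real)) =
     (\<Sum>u\<in>V. of_bool (x u = Some l)) * ((\<Sum>u\<in>V. of_bool (x u = Some l)) + (\<Sum>u\<in>V. of_bool (x u = None)))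
     + (\<Sum>u\<in>V. of_bool (x u = None)) * (\<Sum>u\<in>V. of_bool (x u = Some l))"
  by (simp add: ind_upd sum.distrib distrib_left sum_product)

lemma ind_upd_le:
  "(of_bool (usd_update x y = Some l) :: real) \<le> of_bool (x = Some l) + of_bool (y = Some l)"
  by (cases x; cases y) auto

lemma dsum_same:
  fixes f :: "'a \<Rightarrow> real"
  shows "(\<Sum>u\<in>V. \<Sum>w\<in>V. f u + f w) = 2 * real (card V) * sum f V"
  by (simp add: sum.distrib sum_distrib_left[symmetric] sum_distrib_right[symmetric] algebra_simps)



theorem mainTheorem6:
  fixes V :: "'v set" and k i j :: nat and opn :: "'v \<Rightarrow> nat option" and \<epsilon> :: real
  assumes "finite V" and "V \<noteq> {}"
    and "\<forall>u\<in>V. opn u = None \<or> opn u \<in> Some ` {1..k}"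
    and "i \<in> {1..k}" and "j \<in> {1..k}" and "i \<noteq> j"
    and "0 \<le> \<epsilon>" and "\<epsilon> \<le> 1"
  defines "n \<equiv> real (card V)"
    and "P \<equiv> measure_pmf (gossip_step V opn)"
    and "\<delta> \<equiv> (\<lambda>e c. alpha V c i - (1 + e) * alpha V c j)"
  shows
    "measure_pmf.expectation (gossip_step V opn) (\<delta> \<epsilon>) =
        \<delta> \<epsilon> opn * (alpha V opn i + alpha V opn j + 2 * (1 - beta V k opn))
        + \<epsilon> * alpha V opn i * alpha V opn j
     \<and> (beta V k opn > 0 \<longrightarrow>
        measure_pmf.expectation (gossip_step V opn) (\<delta> 0) =
          \<delta> 0 opn * (1 + alpha V opn i + alpha V opn j
                       - (gamma V k opn + psi V k opn) / beta V k opn))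
     \<and> measure_pmf.variance (gossip_step V opn) (\<delta> 0) \<ge>
          (1 - beta V k opn)\<^sup>2 / n * (alpha V opn i + alpha V opn j)
     \<and> bernstein_cond P
          (\<lambda>c. \<delta> \<epsilon> c - measure_pmf.expectation (gossip_step V opn) (\<delta> \<epsilon>))
          (2 * (1 + \<epsilon>) / n)
          (2 / n * (alpha V opn i + (1 + \<epsilon>)\<^sup>2 * alpha V opn j))"
proof -
  have fin: "finite V" and ne: "V \<noteq> {}" using assms(1,2) .
  have Npos: "n > 0" using fin ne by (simp add: n_def card_gt_0_iff)
  define p where "p = pmf_of_set V"
  define Q where "Q = Pi_pmf V undefined (\<lambda>_::'v. p)"
  define F where "F = (\<lambda>(c :: 'v \<Rightarrow> 'v) u. usd_update (opn u) (opn (c u)))"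
  have gs: "gossip_step V opn = map_pmf F Q"
    by (simp add: gossip_step_def Q_def p_def F_def)
  have finp: "finite (set_pmf p)" using fin ne by (simp add: p_def)
  have Ep: "measure_pmf.expectation p f = (\<Sum>w\<in>V. f w) / n" for f :: "'v \<Rightarrow> real"
    using fin ne by (simp add: p_def integral_pmf_of_set n_def)
  have al: "alpha V c l = (\<Sum>u\<in>V. of_bool (c u = Some l)) / n" for c l
    using alpha_sum[OF fin] by (simp add: n_def)
  define Ai where "Ai = (\<Sum>u\<in>V. of_bool (opn u = Some i) :: real)"
  define Aj where "Aj = (\<Sum>u\<in>V. of_bool (opn u = Some j) :: real)"
  define U where "U = (\<Sum>u\<in>V. of_bool (opn u = None) :: real)"
  have Ai0: "Ai \<ge> 0" and Aj0: "Aj \<ge> 0" and U0: "U \<ge> 0"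
    by (auto simp: Ai_def Aj_def U_def intro: sum_nonneg)
  have cover: "Ai + Aj + U \<le> n"
  proof -
    have "Ai + Aj + U = (\<Sum>u\<in>V. of_bool (opn u = Some i) + of_bool (opn u = Some j) + of_bool (opn u = None) :: real)"
      by (simp add: Ai_def Aj_def U_def sum.distrib)
    also have "\<dots> \<le> (\<Sum>u\<in>V. 1)"
      by (intro sum_mono) (use assms(6) in auto)
    finally show ?thesis by (simp add: n_def)
  qed
  have beta_eq: "beta V k opn = (n - U) / n"
  proof -
    have pu: "(\<Sum>l\<in>{1..k}. of_bool (opn u = Some l) :: real) = 1 - of_bool (opn u = None)" if u: "u \<in> V" for u
    proof (cases "opn u")
      case None then show ?thesis by simp
    next
      case (Some m)
      with assms(3) u have m: "m \<in> {1..k}" by auto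
      have "(\<Sum>l\<in>{1..k}. of_bool (opn u = Some l) :: real) = (\<Sum>l\<in>{1..k}. if m = l then 1 else 0)"
        by (intro sum.cong) (auto simp: Some)
      also have "\<dots> = 1" using m by simp
      finally show ?thesis using Some by simp
    qed
    have "beta V k opn = (\<Sum>l\<in>{1..k}. \<Sum>u\<in>V. of_bool (opn u = Some l) :: real) / n"
      by (simp add: beta_def al sum_divide_distrib)
    also have "\<dots> = (\<Sum>u\<in>V. \<Sum>l\<in>{1..k}. of_bool (opn u = Some l) :: real) / n"
      by (subst sum.swap) simp
    also have "\<dots> = (\<Sum>u\<in>V. 1 - of_bool (opn u = None) :: real) / n"
      by (intro arg_cong[where f="\<lambda>x. x / n"] sum.cong refl pu)
    also have "\<dots> = (n - U) / n"
      by (simp add: sum_subtractf U_def n_def)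
    finally show ?thesis .
  qed
  define G where "G e u w = (of_bool (usd_update (opn u) (opn w) = Some i)
       - (1 + e) * of_bool (usd_update (opn u) (opn w) = Some j)) / n" for e u w
  have rep: "\<delta> e (F c) = (\<Sum>u\<in>V. G e u (c u))" for e c
    by (simp add: \<delta>_def al F_def G_def sum_subtractf sum_divide_distrib sum_distrib_left diff_divide_distrib)
  have EG: "measure_pmf.expectation (gossip_step V opn) (\<delta> e) = (\<Sum>u\<in>V. measure_pmf.expectation p (G e u))" for e
  proof -
    have "measure_pmf.expectation (gossip_step V opn) (\<delta> e) = measure_pmf.expectation Q (\<lambda>c. \<Sum>u\<in>V. G e u (c u))"
      by (simp add: gs rep)
    also have "\<dots> = (\<Sum>u\<in>V. measure_pmf.expectation p (G e u))"
      unfolding Q_def by (rule E_sum_Pi[OF fin finp])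
    finally show ?thesis .
  qed
  have E1: "measure_pmf.expectation (gossip_step V opn) (\<delta> e) =
        \<delta> e opn * (alpha V opn i + alpha V opn j + 2 * (1 - beta V k opn))
        + e * alpha V opn i * alpha V opn j" for e
  proof -
    have "measure_pmf.expectation (gossip_step V opn) (\<delta> e) = (\<Sum>u\<in>V. \<Sum>w\<in>V. G e u w) / n"
      by (simp add: EG Ep sum_divide_distrib)
    also have "(\<Sum>u\<in>V. \<Sum>w\<in>V. G e u w) =
       ((\<Sum>u\<in>V. \<Sum>w\<in>V. (of_bool (usd_update (opn u) (opn w) = Some i) :: real))
        - (1 + e) * (\<Sum>u\<in>V. \<Sum>w\<in>V. (of_bool (usd_update (opn u) (opn w) = Some j) :: real))) / n"
      by (simp add: G_def sum_divide_distrib sum_subtractf sum_distrib_left diff_divide_distrib)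
    also have "\<dots> = ((Ai * (Ai + U) + U * Ai) - (1 + e) * (Aj * (Aj + U) + U * Aj)) / n"
      unfolding pair_count Ai_def Aj_def U_def ..
    finally have L: "measure_pmf.expectation (gossip_step V opn) (\<delta> e) =
       ((Ai * (Ai + U) + U * Ai) - (1 + e) * (Aj * (Aj + U) + U * Aj)) / n / n" .
    have R: "\<delta> e opn * (alpha V opn i + alpha V opn j + 2 * (1 - beta V k opn))
        + e * alpha V opn i * alpha V opn j =
        ((Ai / n) - (1 + e) * (Aj / n)) * (Ai / n + Aj / n + 2 * (1 - (n - U) / n)) + e * (Ai / n) * (Aj / n)"
      by (simp add: \<delta>_def al beta_eq Ai_def Aj_def)
    show ?thesis unfolding L R using Npos by (simp add: field_simps)
  qed
  have part2: "measure_pmf.variance (gossip_step V opn) (\<delta> 0) \<ge>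
          (1 - beta V k opn)\<^sup>2 / n * (alpha V opn i + alpha V opn j)"
  proof -
    define vN where "vN = (Ai + Aj) / n ^ 3 - ((Ai - Aj) / n ^ 2)\<^sup>2"
    have varp: "measure_pmf.variance p f = (\<Sum>w\<in>V. (f w)\<^sup>2) / n - ((\<Sum>w\<in>V. f w) / n)\<^sup>2" for f
      by (subst measure_pmf.variance_eq) (auto simp: integrable_measure_pmf_finite[OF finp] Ep)
    have vu: "measure_pmf.variance p (G 0 u) = vN" if u: "opn u = None" for u
    proof -
      have g: "G 0 u w = (of_bool (opn w = Some i) - of_bool (opn w = Some j)) / n" for w
        by (simp add: G_def u)
      have g2: "(G 0 u w)\<^sup>2 = (of_bool (opn w = Some i) + of_bool (opn w = Some j)) / n ^ 2" for w
        unfolding g using assms(6) by (auto simp: power_divide)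
      have s1: "(\<Sum>w\<in>V. G 0 u w) = (Ai - Aj) / n"
        unfolding g by (simp add: Ai_def Aj_def sum_divide_distrib[symmetric] sum_subtractf)
      have s2: "(\<Sum>w\<in>V. (G 0 u w)\<^sup>2) = (Ai + Aj) / n ^ 2"
        unfolding g2 by (simp add: Ai_def Aj_def sum_divide_distrib[symmetric] sum.distrib)
      show ?thesis unfolding varp s1 s2 vN_def using Npos
        by (simp add: power2_eq_square power3_eq_cube field_simps)
    qed
    have "measure_pmf.variance (gossip_step V opn) (\<delta> 0) = measure_pmf.variance Q (\<lambda>c. \<Sum>u\<in>V. G 0 u (c u))"
      by (simp add: gs rep)
    also have "\<dots> = (\<Sum>u\<in>V. measure_pmf.variance p (G 0 u))"
      unfolding Q_def by (rule Var_sum_Pi[OF fin finp])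
    also have "\<dots> \<ge> (\<Sum>u\<in>V. of_bool (opn u = None) * measure_pmf.variance p (G 0 u))"
      by (intro sum_mono) (auto simp: measure_pmf.variance_positive)
    also have "(\<Sum>u\<in>V. of_bool (opn u = None) * measure_pmf.variance p (G 0 u)) = (\<Sum>u\<in>V. of_bool (opn u = None) * vN)"
      by (intro sum.cong refl) (use vu in \<open>auto simp del: of_bool_eq\<close>)
    also have "\<dots> = U * vN" by (simp add: U_def sum_distrib_right)
    finally have V1: "measure_pmf.variance (gossip_step V opn) (\<delta> 0) \<ge> U * vN" .
    have key: "U * (n * (Ai + Aj) - (Ai - Aj)\<^sup>2) \<ge> U\<^sup>2 * (Ai + Aj)"
    proof -
      have "(Ai - Aj)\<^sup>2 \<le> (Ai + Aj)\<^sup>2" using Ai0 Aj0 by (simp add: power2_eq_square algebra_simps)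
      also have "(Ai + Aj)\<^sup>2 \<le> (n - U) * (Ai + Aj)"
        unfolding power2_eq_square by (rule mult_right_mono) (use cover Ai0 Aj0 in auto)
      finally have "n * (Ai + Aj) - (Ai - Aj)\<^sup>2 \<ge> U * (Ai + Aj)" by (simp add: algebra_simps)
      from mult_left_mono[OF this U0] show ?thesis by (simp add: power2_eq_square algebra_simps)
    qed
    have "(1 - beta V k opn)\<^sup>2 / n * (alpha V opn i + alpha V opn j) = U\<^sup>2 * (Ai + Aj) / n ^ 4"
      using Npos by (simp add: beta_eq al Ai_def Aj_def field_simps power2_eq_square eval_nat_numeral)
    also have "\<dots> \<le> U * (n * (Ai + Aj) - (Ai - Aj)\<^sup>2) / n ^ 4"
      by (rule divide_right_mono[OF key]) simp
    also have "\<dots> = U * vN"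
      using Npos by (simp add: vN_def field_simps power2_eq_square eval_nat_numeral)
    finally show ?thesis using V1 by linarith
  qed
  have part3: "bernstein_cond P
          (\<lambda>c. \<delta> \<epsilon> c - measure_pmf.expectation (gossip_step V opn) (\<delta> \<epsilon>))
          (2 * (1 + \<epsilon>) / n)
          (2 / n * (alpha V opn i + (1 + \<epsilon>)\<^sup>2 * alpha V opn j))"
    unfolding bernstein_cond_def
  proof (intro allI impI)
    fix l :: real
    define D where "D = 2 * (1 + \<epsilon>) / n"
    define K where "K = 1 - \<bar>l\<bar> * D / 3"
    assume "\<bar>l\<bar> * (2 * (1 + \<epsilon>) / n) < 3"
    hence l: "\<bar>l\<bar> * D < 3" by (simp add: D_def)
    have K: "K > 0" using l by (simp add: K_def)
    define m where "m u = measure_pmf.expectation p (G \<epsilon> u)" for u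
    define s where "s = 2 / n * (alpha V opn i + (1 + \<epsilon>)\<^sup>2 * alpha V opn j)"
    have Gb: "- (1 + \<epsilon>) / n \<le> G \<epsilon> u w \<and> G \<epsilon> u w \<le> 1 / n" for u w
      using Npos assms(7) by (auto simp: G_def divide_right_mono frac_le)
    have mb: "- (1 + \<epsilon>) / n \<le> m u \<and> m u \<le> 1 / n" for u
    proof -
      have "(\<Sum>w\<in>V. G \<epsilon> u w) \<le> (\<Sum>w\<in>V. 1 / n)" by (intro sum_mono) (use Gb in auto)
      moreover have "(\<Sum>w\<in>V. - (1 + \<epsilon>) / n) \<le> (\<Sum>w\<in>V. G \<epsilon> u w)" by (intro sum_mono) (use Gb in auto)
      ultimately show ?thesis using Npos by (auto simp: m_def Ep n_def[symmetric] divide_le_eq le_divide_eq)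
    qed
    have hb: "\<bar>G \<epsilon> u w - m u\<bar> \<le> D" for u w
    proof -
      have nd: "- (1 + \<epsilon>) / n = - ((1 + \<epsilon>) / n)" by (rule minus_divide_left[symmetric])
      have "\<bar>G \<epsilon> u w - m u\<bar> \<le> 1 / n + (1 + \<epsilon>) / n" unfolding abs_le_iff using Gb[of u w] mb[of u] unfolding nd by linarith
      also have "\<dots> \<le> D" using Npos assms(7) by (simp add: D_def divide_right_mono add_divide_distrib[symmetric])
      finally show ?thesis .
    qed
    have E0: "measure_pmf.expectation p (\<lambda>w. G \<epsilon> u w - m u) = 0" for u
      by (subst Bochner_Integration.integral_diff) (auto intro: integrable_measure_pmf_finite[OF finp] simp: m_def)
    have each: "measure_pmf.expectation p (\<lambda>w. exp (l * (G \<epsilon> u w - m u))) \<le>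
        exp (l\<^sup>2 * measure_pmf.variance p (G \<epsilon> u) / 2 / K)" for u
      using bern_scalar[OF finp E0[of u] _ l] hb by (simp add: K_def m_def)
    have vs: "(\<Sum>u\<in>V. measure_pmf.variance p (G \<epsilon> u)) \<le> s"
    proof -
      define f where "f u = (of_bool (opn u = Some i) + (1 + \<epsilon>)\<^sup>2 * of_bool (opn u = Some j)) / n\<^sup>2" for u
      have pw: "(G \<epsilon> u w)\<^sup>2 \<le> f u + f w" for u w
      proof -
        define x where "x = usd_update (opn u) (opn w)"
        have sq: "(of_bool (x = Some i) - (1 + \<epsilon>) * of_bool (x = Some j))\<^sup>2
              = (of_bool (x = Some i) + (1 + \<epsilon>)\<^sup>2 * of_bool (x = Some j) :: real)"
          using assms(6) by (cases "x = Some i"; cases "x = Some j") (auto simp: power2_eq_square algebra_simps)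
        have "(G \<epsilon> u w)\<^sup>2 = (of_bool (x = Some i) + (1 + \<epsilon>)\<^sup>2 * of_bool (x = Some j)) / n\<^sup>2"
          unfolding G_def x_def[symmetric] power_divide sq ..
        also have "\<dots> \<le> ((of_bool (opn u = Some i) + of_bool (opn w = Some i)) +
             (1 + \<epsilon>)\<^sup>2 * (of_bool (opn u = Some j) + of_bool (opn w = Some j))) / n\<^sup>2"
          unfolding x_def
          by (intro divide_right_mono add_mono mult_left_mono ind_upd_le) auto
        also have "\<dots> = f u + f w" by (simp add: f_def add_divide_distrib[symmetric] algebra_simps)
        finally show ?thesis .
      qed
      have "(\<Sum>u\<in>V. measure_pmf.variance p (G \<epsilon> u)) \<le> (\<Sum>u\<in>V. measure_pmf.expectation p (\<lambda>w. (G \<epsilon> u w)\<^sup>2))"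
      proof (intro sum_mono)
        fix u
        show "measure_pmf.variance p (G \<epsilon> u) \<le> measure_pmf.expectation p (\<lambda>w. (G \<epsilon> u w)\<^sup>2)"
          by (subst measure_pmf.variance_eq) (auto simp: integrable_measure_pmf_finite[OF finp])
      qed
      also have "\<dots> = (\<Sum>u\<in>V. \<Sum>w\<in>V. (G \<epsilon> u w)\<^sup>2) / n"
        by (simp add: Ep sum_divide_distrib)
      also have "\<dots> \<le> (\<Sum>u\<in>V. \<Sum>w\<in>V. f u + f w) / n"
        using Npos by (intro divide_right_mono sum_mono pw) auto
      also have "\<dots> = 2 * sum f V"
        using Npos by (simp add: dsum_same n_def[symmetric])
      also have "\<dots> = s"
        using Npos by (simp add: f_def s_def al Ai_def Aj_def sum.distrib sum_divide_distrib[symmetric]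
            sum_distrib_left[symmetric] field_simps power2_eq_square)
      finally show ?thesis .
    qed
    have "(\<integral>x. exp (l * (\<delta> \<epsilon> x - measure_pmf.expectation (gossip_step V opn) (\<delta> \<epsilon>))) \<partial>P)
       = measure_pmf.expectation Q (\<lambda>c. exp (\<Sum>u\<in>V. l * (G \<epsilon> u (c u) - m u)))"
      unfolding EG by (simp add: P_def gs rep m_def sum_subtractf sum_distrib_left right_diff_distrib)
    also have "\<dots> = (\<Prod>u\<in>V. measure_pmf.expectation p (\<lambda>w. exp (l * (G \<epsilon> u w - m u))))"
      unfolding Q_def by (rule E_prod_exp_Pi[OF fin finp])
    also have "\<dots> \<le> (\<Prod>u\<in>V. exp (l\<^sup>2 * measure_pmf.variance p (G \<epsilon> u) / 2 / K))"
      by (intro prod_mono conjI each integral_nonneg_AE) auto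
    also have "\<dots> = exp (l\<^sup>2 * (\<Sum>u\<in>V. measure_pmf.variance p (G \<epsilon> u)) / 2 / K)"
      by (simp add: exp_sum[OF fin, symmetric] sum_distrib_left sum_divide_distrib)
    also have "\<dots> \<le> exp (l\<^sup>2 * s / 2 / K)"
      using K vs by (auto intro!: divide_right_mono mult_left_mono)
    finally show "(\<integral>x. exp (l * (\<delta> \<epsilon> x - measure_pmf.expectation (gossip_step V opn) (\<delta> \<epsilon>))) \<partial>P)
       \<le> exp (l\<^sup>2 * (2 / n * (alpha V opn i + (1 + \<epsilon>)\<^sup>2 * alpha V opn j)) / 2 /
                (1 - \<bar>l\<bar> * (2 * (1 + \<epsilon>) / n) / 3))"
      by (simp add: s_def K_def D_def)
  qed
  have part1b: "beta V k opn > 0 \<longrightarrow>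
        measure_pmf.expectation (gossip_step V opn) (\<delta> 0) =
          \<delta> 0 opn * (1 + alpha V opn i + alpha V opn j
                       - (gamma V k opn + psi V k opn) / beta V k opn)"
  proof
    assume b: "beta V k opn > 0"
    have h: "(gamma V k opn + psi V k opn) / beta V k opn = 2 * beta V k opn - 1"
      using b by (simp add: psi_def field_simps)
    show "measure_pmf.expectation (gossip_step V opn) (\<delta> 0) =
          \<delta> 0 opn * (1 + alpha V opn i + alpha V opn j
                       - (gamma V k opn + psi V k opn) / beta V k opn)"
      unfolding h using E1[of 0] by (simp add: algebra_simps)
  qed
  show ?thesis using E1 part1b part2 part3 by blast
qed

end
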